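(* Let $G_{\mathcal C}(A)$ be a two-player zero-sum complex game with $A=(a_{ij})\in\mathbb{C}^{m\times n}$ and strategy arguments $\alpha_0,\beta_0\in(0,\tfrac{\pi}{2})$. Then $G_{\mathcal C}(A)$ has a complex Nash equilibrium $(z^0,w^0)$ in which both $z^0$ and $w^0$ are equalizing strategies if and only if both of the following systems have at least one solution: $$\text{(I)}\quad \sum_{i=1}^m\overline{z_i}\,a_{ij}=\eta\ (j=1,\dots,n),\qquad \sum_{i=1}^m\overline{z_i}=1,\qquad \overline{z_i}=0\text{ or }|\arg\overline{z_i}|\le\alpha_0\ (i=1,\dots,m),$$ in unknowns $z\in\mathbb{C}^m$, $\eta\in\mathbb{C}$; $$\text{(II)}\quad \sum_{j=1}^n a_{ij}w_j=\theta\ (i=1,\dots,m),\qquad \sum_{j=1}^n w_j=1,\qquad w_j=0\text{ or }|\arg w_j|\le\beta_0\ (j=1,\dots,n),$$ in unknowns $w\in\mathbb{C}^n$, $\theta\in\mathbb{C}$. Moreover, if (I) and (II) have solutions, then $\mathrm{Re}(\eta)=\mathrm{Re}(\theta)=v_A$, the value of the game.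
   Context: For $\gamma\in(0,\tfrac{\pi}{2})$ and $p\ge 1$ let $S^p_\gamma=\{z\in\mathbb{C}^p:\ \text{for each }k,\ z_k=0\text{ or }|\arg z_k|\le\gamma,\ \sum_{k=1}^p z_k=1\}$ ($\arg$ the principal argument in $(-\pi,\pi]$). Its extreme points ("pure strategies") are $d^1,\dots,d^{p^2}$, where $d^k=e^k$ (standard basis vector) for $k\le p$, and $d^{p+1},\dots,d^{p^2}$ are the $p(p-1)$ vectors having exactly two nonzero coordinates, one equal to $\tfrac12+bi$ and another equal to $\tfrac12-bi$, with $b=\tfrac12\tan\gamma$. The two-player zero-sum complex game $G_{\mathcal C}(A)$: player I chooses $z\in S^m_{\alpha_0}$, player II chooses $w\in S^n_{\beta_0}$, player I receives $\mathrm{Re}(z^*Aw)$ and player II receives $-\mathrm{Re}(z^*Aw)$ ($z^*$ the conjugate transpose). Pure strategies: $d^i$, $i\in\mathcal I=\{1,\dots,m^2\}$, extreme points of $S^m_{\alpha_0}$; $d^j$, $j\in\mathcal J=\{1,\dots,n^2\}$, extreme points of $S^n_{\beta_0}$. A strategy $z\in S^m_{\alpha_0}$ of player I is equalizing with equalizing constant $c\in\mathbb{R}$ if $\mathrm{Re}(z^*Ad^j)=c$ for all $j\in\mathcal J$; a strategy $w\in S^n_{\beta_0}$ of player II is equalizing with equalizing constant $c\in\mathbb{R}$ if $\mathrm{Re}((d^i)^*Aw)=c$ for all $i\in\mathcal I$. A pair $(z^0,w^0)\in S^m_{\alpha_0}\times S^n_{\beta_0}$ is a complex Nash equilibrium if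 $\mathrm{Re}(z^*Aw^0)\le\mathrm{Re}((z^0)^*Aw^0)\le\mathrm{Re}((z^0)^*Aw)$ for all $z\in S^m_{\alpha_0}$, $w\in S^n_{\beta_0}$; the value is $v_A=\mathrm{Re}((z^0)^*Aw^0)$. *)

theory Defs
  imports "HOL-Analysis.Analysis"
begin

text \<open>Strategy set S^p_gamma, with p given by the finite index type 'p.
  Arg is the principal argument in (-pi, pi].\<close>
definition strat_set :: "real \<Rightarrow> (complex ^ 'p::finite) set" where
  "strat_set \<gamma> = {z. (\<forall>k. z $ k = 0 \<or> \<bar>Arg (z $ k)\<bar> \<le> \<gamma>) \<and> (\<Sum>k\<in>UNIV. z $ k) = 1}"

definition pure_strats :: "real \<Rightarrow> (complex ^ 'p::finite) set" where
  "pure_strats \<gamma> =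
     {axis k 1 | k. True} \<union>
     {(\<chi> i. if i = k then Complex (1/2) (tan \<gamma> / 2)
            else if i = l then Complex (1/2) (- (tan \<gamma> / 2)) else 0) | k l. k \<noteq> l}"

definition cform :: "complex ^ 'm::finite \<Rightarrow> complex ^ 'n::finite ^ 'm \<Rightarrow> complex ^ 'n \<Rightarrow> complex" where
  "cform z A w = (\<Sum>i\<in>UNIV. \<Sum>j\<in>UNIV. cnj (z $ i) * (A $ i $ j) * (w $ j))"

definition equalizing_I ::
  "real \<Rightarrow> real \<Rightarrow> complex ^ 'n::finite ^ 'm::finite \<Rightarrow> complex ^ 'm \<Rightarrow> real \<Rightarrow> bool" where
  "equalizing_I \<alpha>0 \<beta>0 A z c \<longleftrightarrow>
     z \<in> strat_set \<alpha>0 \<and> (\<forall>d \<in> pure_strats \<beta>0. Re (cform z A d) = c)"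

definition equalizing_II ::
  "real \<Rightarrow> real \<Rightarrow> complex ^ 'n::finite ^ 'm::finite \<Rightarrow> complex ^ 'n \<Rightarrow> real \<Rightarrow> bool" where
  "equalizing_II \<alpha>0 \<beta>0 A w c \<longleftrightarrow>
     w \<in> strat_set \<beta>0 \<and> (\<forall>d \<in> pure_strats \<alpha>0. Re (cform d A w) = c)"

definition complex_NE ::
  "real \<Rightarrow> real \<Rightarrow> complex ^ 'n::finite ^ 'm::finite \<Rightarrow> complex ^ 'm \<Rightarrow> complex ^ 'n \<Rightarrow> bool" where
  "complex_NE \<alpha>0 \<beta>0 A z0 w0 \<longleftrightarrow>
     z0 \<in> strat_set \<alpha>0 \<and> w0 \<in> strat_set \<beta>0 \<and>
     (\<forall>z \<in> strat_set \<alpha>0. \<forall>w \<in> strat_set \<beta>0.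
        Re (cform z A w0) \<le> Re (cform z0 A w0) \<and> Re (cform z0 A w0) \<le> Re (cform z0 A w))"

definition systemI :: "real \<Rightarrow> complex ^ 'n::finite ^ 'm::finite \<Rightarrow> complex ^ 'm \<Rightarrow> complex \<Rightarrow> bool" where
  "systemI \<alpha>0 A z \<eta> \<longleftrightarrow>
     (\<forall>j. (\<Sum>i\<in>UNIV. cnj (z $ i) * A $ i $ j) = \<eta>) \<and>
     (\<Sum>i\<in>UNIV. cnj (z $ i)) = 1 \<and>
     (\<forall>i. cnj (z $ i) = 0 \<or> \<bar>Arg (cnj (z $ i))\<bar> \<le> \<alpha>0)"

definition systemII :: "real \<Rightarrow> complex ^ 'n::finite ^ 'm::finite \<Rightarrow> complex ^ 'n \<Rightarrow> complex \<Rightarrow> bool" where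
  "systemII \<beta>0 A w \<theta> \<longleftrightarrow>
     (\<forall>i. (\<Sum>j\<in>UNIV. A $ i $ j * w $ j) = \<theta>) \<and>
     (\<Sum>j\<in>UNIV. w $ j) = 1 \<and>
     (\<forall>j. w $ j = 0 \<or> \<bar>Arg (w $ j)\<bar> \<le> \<beta>0)"

end

theory Submission
  imports Defs
begin

lemma abs_Arg_cnj: "\<bar>Arg (cnj z)\<bar> = \<bar>Arg z\<bar>"
  by (simp add: Arg_cnj)

lemma cform_left: "cform z A w = (\<Sum>j\<in>UNIV. (\<Sum>i\<in>UNIV. cnj (z $ i) * A $ i $ j) * w $ j)"
  unfolding cform_def by (subst sum.swap) (simp add: sum_distrib_right)

lemma cform_right: "cform z A w = (\<Sum>i\<in>UNIV. cnj (z $ i) * (\<Sum>j\<in>UNIV. A $ i $ j * w $ j))"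
  unfolding cform_def by (simp add: sum_distrib_left mult.assoc)

lemma strat_systemI: "z \<in> strat_set a \<longleftrightarrow>
   (\<Sum>i\<in>UNIV. cnj (z $ i)) = 1 \<and> (\<forall>i. cnj (z $ i) = 0 \<or> \<bar>Arg (cnj (z $ i))\<bar> \<le> a)"
proof -
  have "(\<Sum>i\<in>UNIV. cnj (z $ i)) = cnj (\<Sum>i\<in>UNIV. z $ i)" by simp
  then have "(\<Sum>i\<in>UNIV. cnj (z $ i)) = 1 \<longleftrightarrow> (\<Sum>i\<in>UNIV. z $ i) = 1"
    by (metis complex_cnj_cnj complex_cnj_one)
  then show ?thesis unfolding strat_set_def by (auto simp: abs_Arg_cnj)
qed

lemma sum_pure:
  assumes "d \<in> pure_strats g"
  shows "(\<Sum>j\<in>UNIV. d $ j) = 1"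
proof -
  from assms consider k where "d = axis k 1"
    | k l where "k \<noteq> l" "d = (\<chi> i. if i = k then Complex (1/2) (tan g / 2)
            else if i = l then Complex (1/2) (- (tan g / 2)) else 0)"
    unfolding pure_strats_def by blast
  then show ?thesis
  proof cases
    case 1 then show ?thesis by (simp add: axis_def)
  next
    case (2 k l)
    have "(\<Sum>j\<in>UNIV. d $ j) = (\<Sum>j\<in>{k,l}. d $ j)"
      by (rule sum.mono_neutral_right) (auto simp: 2)
    also have "\<dots> = 1" using 2 by (simp add: complex_eq_iff)
    finally show ?thesis .
  qed
qed

lemma pure_nonempty_pair:
  fixes k l :: "'p::finite"
  assumes "k \<noteq> l"
  shows "(\<chi> i. if i = k then Complex (1/2) (tan g / 2)
            else if i = l then Complex (1/2) (- (tan g / 2)) else 0) \<in> pure_strats g"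
  using assms unfolding pure_strats_def by blast

lemma axis_pure: "axis k 1 \<in> pure_strats g"
  unfolding pure_strats_def by blast

lemma sysI_form:
  assumes "\<forall>j. (\<Sum>i\<in>UNIV. cnj (z $ i) * A $ i $ j) = \<eta>" "(\<Sum>j\<in>UNIV. d $ j) = 1"
  shows "cform z A d = \<eta>"
  using assms by (simp add: cform_left sum_distrib_left[symmetric])

lemma sysII_form:
  assumes "\<forall>i. (\<Sum>j\<in>UNIV. A $ i $ j * w $ j) = \<theta>" "(\<Sum>i\<in>UNIV. cnj (d $ i)) = 1"
  shows "cform d A w = \<theta>"
  using assms by (simp add: cform_right sum_distrib_right[symmetric])

lemma sum_cnj_strat: "z \<in> strat_set a \<Longrightarrow> (\<Sum>i\<in>UNIV. cnj (z $ i)) = 1"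
  using strat_systemI by blast

lemma sum_cnj_pure: "d \<in> pure_strats a \<Longrightarrow> (\<Sum>i\<in>UNIV. cnj (d $ i)) = 1"
  using sum_pure[of d a] by (metis cnj_sum complex_cnj_one)

lemma cform_axis: "cform z A (axis k 1) = (\<Sum>i\<in>UNIV. cnj (z $ i) * A $ i $ k)"
  by (simp add: cform_left axis_def if_distrib cong: if_cong)

lemma cform_pair:
  fixes k l :: "'n::finite"
  assumes "k \<noteq> l"
  shows "cform z A (\<chi> i. if i = k then Complex (1/2) t
            else if i = l then Complex (1/2) (- t) else 0) =
    (\<Sum>i\<in>UNIV. cnj (z $ i) * A $ i $ k) * Complex (1/2) t + (\<Sum>i\<in>UNIV. cnj (z $ i) * A $ i $ l) * Complex (1/2) (-t)"
    (is "cform z A ?d = _")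
proof -
  have "cform z A ?d = (\<Sum>j\<in>{k,l}. (\<Sum>i\<in>UNIV. cnj (z $ i) * A $ i $ j) * ?d $ j)"
    unfolding cform_left by (rule sum.mono_neutral_right) auto
  then show ?thesis using assms by simp
qed

lemma cform_axis2: "cform (axis k 1) A w = (\<Sum>j\<in>UNIV. A $ k $ j * w $ j)"
proof -
  have "(\<Sum>i\<in>UNIV. cnj (axis k 1 $ i) * (\<Sum>j\<in>UNIV. A $ i $ j * w $ j))
      = (\<Sum>i\<in>UNIV. if i = k then (\<Sum>j\<in>UNIV. A $ i $ j * w $ j) else 0)"
    by (rule sum.cong) (auto simp: axis_def)
  then show ?thesis by (simp add: cform_right)
qed

lemma cform_pair2:
  fixes k l :: "'m::finite"
  assumes "k \<noteq> l"
  shows "cform (\<chi> i. if i = k then Complex (1/2) t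
            else if i = l then Complex (1/2) (- t) else 0) A w =
    Complex (1/2) (-t) * (\<Sum>j\<in>UNIV. A $ k $ j * w $ j) + Complex (1/2) t * (\<Sum>j\<in>UNIV. A $ l $ j * w $ j)"
    (is "cform ?d A w = _")
proof -
  have "cform ?d A w = (\<Sum>i\<in>{k,l}. cnj (?d $ i) * (\<Sum>j\<in>UNIV. A $ i $ j * w $ j))"
    unfolding cform_right by (rule sum.mono_neutral_right) auto
  then show ?thesis using assms by (simp add: complex_cnj)
qed

lemma eqI_sys:
  assumes "equalizing_I a b A z c" "0 < b" "b < pi/2"
  shows "systemI a A z (\<Sum>i\<in>UNIV. cnj (z $ i) * A $ i $ k0)"
proof -
  define u where "u j = (\<Sum>i\<in>UNIV. cnj (z $ i) * A $ i $ j)" for j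
  have t: "tan b > 0" using assms by (simp add: tan_gt_zero)
  have re: "Re (u j) = c" for j
    using assms(1) axis_pure[of j b] unfolding equalizing_I_def by (auto simp: cform_axis u_def)
  have "u j = u k0" for j
  proof (cases "j = k0")
    case False
    have "Re (u j * Complex (1/2) (tan b / 2) + u k0 * Complex (1/2) (- (tan b / 2))) = c"
      using assms(1) pure_nonempty_pair[OF False, of b] cform_pair[OF False, of z A "tan b / 2"]
      unfolding equalizing_I_def u_def by auto
    then have "Im (u j) = Im (u k0)" using re[of j] re[of k0] t
      by (simp add: algebra_simps)
    then show ?thesis using re[of j] re[of k0] by (simp add: complex_eq_iff)
  qed simp
  then show ?thesis using assms(1) unfolding systemI_def equalizing_I_def strat_systemI u_def by auto
qed

lemma eqII_sys:
  assumes "equalizing_II a b A w c" "0 < a" "a < pi/2"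
  shows "systemII b A w (\<Sum>j\<in>UNIV. A $ k0 $ j * w $ j)"
proof -
  define u where "u i = (\<Sum>j\<in>UNIV. A $ i $ j * w $ j)" for i
  have t: "tan a > 0" using assms by (simp add: tan_gt_zero)
  have re: "Re (u j) = c" for j
    using assms(1) axis_pure[of j a] unfolding equalizing_II_def by (auto simp: cform_axis2 u_def)
  have "u j = u k0" for j
  proof (cases "j = k0")
    case False
    have "Re (Complex (1/2) (- (tan a / 2)) * u j + Complex (1/2) (tan a / 2) * u k0) = c"
      using assms(1) pure_nonempty_pair[OF False, of a] cform_pair2[OF False, of "tan a / 2" A w]
      unfolding equalizing_II_def u_def by auto
    then have "Im (u j) = Im (u k0)" using re[of j] re[of k0] t
      by (simp add: algebra_simps)
    then show ?thesis using re[of j] re[of k0] by (simp add: complex_eq_iff)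
  qed simp
  then show ?thesis using assms(1) unfolding systemII_def equalizing_II_def strat_set_def u_def by auto
qed

lemma sysI_strat: "systemI a A z \<eta> \<Longrightarrow> z \<in> strat_set a"
  unfolding systemI_def strat_systemI by auto

lemma sysII_strat: "systemII b A w \<theta> \<Longrightarrow> w \<in> strat_set b"
  unfolding systemII_def strat_set_def by auto

lemma strat_sum: "w \<in> strat_set b \<Longrightarrow> (\<Sum>j\<in>UNIV. w $ j) = 1"
  unfolding strat_set_def by auto

theorem theorem7p5:
  fixes A :: "complex ^ 'n::finite ^ 'm::finite"
    and \<alpha>0 \<beta>0 :: real
  assumes "0 < \<alpha>0" "\<alpha>0 < pi / 2" "0 < \<beta>0" "\<beta>0 < pi / 2"
  shows "((\<exists>z0 w0. complex_NE \<alpha>0 \<beta>0 A z0 w0 \<and>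
             (\<exists>c. equalizing_I \<alpha>0 \<beta>0 A z0 c) \<and> (\<exists>c. equalizing_II \<alpha>0 \<beta>0 A w0 c))
          \<longleftrightarrow> ((\<exists>z \<eta>. systemI \<alpha>0 A z \<eta>) \<and> (\<exists>w \<theta>. systemII \<beta>0 A w \<theta>)))
       \<and> (\<forall>z \<eta> w \<theta>. systemI \<alpha>0 A z \<eta> \<longrightarrow> systemII \<beta>0 A w \<theta> \<longrightarrow>
            (\<forall>z0 w0. complex_NE \<alpha>0 \<beta>0 A z0 w0 \<longrightarrow>
               Re \<eta> = Re (cform z0 A w0) \<and> Re \<theta> = Re (cform z0 A w0)))"
proof (intro conjI iffI allI impI)
  assume "\<exists>z0 w0. complex_NE \<alpha>0 \<beta>0 A z0 w0 \<and>
             (\<exists>c. equalizing_I \<alpha>0 \<beta>0 A z0 c) \<and> (\<exists>c. equalizing_II \<alpha>0 \<beta>0 A w0 c)"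
  then obtain z0 w0 c1 c2 where "equalizing_I \<alpha>0 \<beta>0 A z0 c1" "equalizing_II \<alpha>0 \<beta>0 A w0 c2"
    by blast
  then show "\<exists>z \<eta>. systemI \<alpha>0 A z \<eta>" "\<exists>w \<theta>. systemII \<beta>0 A w \<theta>"
    using eqI_sys eqII_sys assms by blast+
next
  assume "(\<exists>z \<eta>. systemI \<alpha>0 A z \<eta>) \<and> (\<exists>w \<theta>. systemII \<beta>0 A w \<theta>)"
  then obtain z \<eta> w \<theta> where I: "systemI \<alpha>0 A z \<eta>" and II: "systemII \<beta>0 A w \<theta>" by blast
  have zs: "z \<in> strat_set \<alpha>0" and ws: "w \<in> strat_set \<beta>0" using I II sysI_strat sysII_strat by auto
  have f1: "cform z A d = \<eta>" if "(\<Sum>j\<in>UNIV. d $ j) = 1" for d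
    using I that sysI_form unfolding systemI_def by blast
  have f2: "cform d A w = \<theta>" if "(\<Sum>i\<in>UNIV. cnj (d $ i)) = 1" for d
    using II that sysII_form unfolding systemII_def by blast
  have g1: "cform z' A w = \<theta>" if "z' \<in> strat_set \<alpha>0" for z'
    using f2 sum_cnj_strat[OF that] by blast
  have g2: "cform z A w' = \<eta>" if "w' \<in> strat_set \<beta>0" for w'
    using f1 strat_sum[OF that] by blast
  have "complex_NE \<alpha>0 \<beta>0 A z w"
    unfolding complex_NE_def using zs ws g1 g2 by auto
  moreover have "equalizing_I \<alpha>0 \<beta>0 A z (Re \<eta>)"
    unfolding equalizing_I_def using zs f1 sum_pure by auto
  moreover have "equalizing_II \<alpha>0 \<beta>0 A w (Re \<theta>)"
    unfolding equalizing_II_def using ws f2 sum_cnj_pure by auto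
  ultimately show "\<exists>z0 w0. complex_NE \<alpha>0 \<beta>0 A z0 w0 \<and>
             (\<exists>c. equalizing_I \<alpha>0 \<beta>0 A z0 c) \<and> (\<exists>c. equalizing_II \<alpha>0 \<beta>0 A w0 c)"
    by blast
next
  fix z \<eta> w \<theta> z0 w0
  assume I: "systemI \<alpha>0 A z \<eta>" and II: "systemII \<beta>0 A w \<theta>" and NE: "complex_NE \<alpha>0 \<beta>0 A z0 w0"
  have zs: "z \<in> strat_set \<alpha>0" and ws: "w \<in> strat_set \<beta>0" using I II sysI_strat sysII_strat by auto
  have f1: "cform z A d = \<eta>" if "(\<Sum>j\<in>UNIV. d $ j) = 1" for d
    using I that sysI_form unfolding systemI_def by blast
  have f2: "cform d A w = \<theta>" if "(\<Sum>i\<in>UNIV. cnj (d $ i)) = 1" for d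
    using II that sysII_form unfolding systemII_def by blast
  have z0s: "z0 \<in> strat_set \<alpha>0" and w0s: "w0 \<in> strat_set \<beta>0" using NE unfolding complex_NE_def by auto
  have a: "cform z A w0 = \<eta>" using f1 strat_sum[OF w0s] by blast
  have b: "cform z0 A w = \<theta>" using f2 sum_cnj_strat[OF z0s] by blast
  have e: "\<eta> = \<theta>" using f1[OF strat_sum[OF ws]] f2[OF sum_cnj_strat[OF zs]] by simp
  have "Re (cform z A w0) \<le> Re (cform z0 A w0)" "Re (cform z0 A w0) \<le> Re (cform z0 A w)"
    using NE zs ws unfolding complex_NE_def by auto
  then show "Re \<eta> = Re (cform z0 A w0)" "Re \<theta> = Re (cform z0 A w0)"
    using a b e by auto
qed

end
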